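(* Let $r$ be a right reflection point of $\mathrm{OPT}$ with incident legs $\ell,\ell'$, where $\ell$ is above $\ell'$. Let $P_1$ and $P_2$ be subpaths of $\mathrm{OPT}$, both starting at $r$ and both of shadow $1$, with $\ell\in P_1$ and $\ell'\in P_2$. If there is a vertical line $\Gamma$ with $x(\Gamma)>x(r)$ crossing both $P_1$ and $P_2$, then $P_1$ is above $P_2$ in the range $[x(r),x(\Gamma)]$.
   Context: Instance: vertical line segments $s_1,\dots,s_n$ in $\mathbb{R}^2$, each of length $1$, with pairwise distinct $x$-coordinates. A tour is a cyclic sequence of points $p_1,\dots,p_\sigma$, each on some segment, with every segment containing at least one $p_j$; the straight segments joining consecutive points are legs. $\mathrm{OPT}$ is a fixed minimum-cost tour, oriented, with no two consecutive points on the same segment (no vertical legs) and not self-crossing. A point $p_j$ of $\mathrm{OPT}$ on segment $s$ is a right reflection point if both of its incident legs lie in the half-plane $x\ge x(s)$. A leg $\ell$ incident to a reflection point is above the other incident leg $\ell'$ if (apart from their common point) all points of $\ell$ have larger $y$-coordinate than all points of $\ell'$. Shadow of a path: the maximum, over vertical lines, of the number of its legs intersecting the line. A path $P_1$ is above a path $P_2$ in a range $I=[x_0,x_1]$ if for every vertical line $\Gamma'$ with $x(\Gamma')\in I$, the top-most intersection point of $\Gamma'$ with $P_1\cup P_2$ lies on $P_1$. *)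

theory Defs
  imports "HOL-Analysis.Analysis"
begin

type_synonym rpt = "real \<times> real"

definition seg :: "(nat \<Rightarrow> rpt) \<Rightarrow> nat \<Rightarrow> rpt set" where
  "seg base i = closed_segment (base i) (base i + (0::real, 1::real))"

definition valid_instance :: "nat \<Rightarrow> (nat \<Rightarrow> rpt) \<Rightarrow> bool" where
  "valid_instance n base \<longleftrightarrow> inj_on (\<lambda>i. fst (base i)) {..<n}"

definition is_tour :: "nat \<Rightarrow> (nat \<Rightarrow> rpt) \<Rightarrow> rpt list \<Rightarrow> bool" where
  "is_tour n base ps \<longleftrightarrow> ps \<noteq> [] \<and>
     (\<forall>p \<in> set ps. \<exists>i<n. p \<in> seg base i) \<and>
     (\<forall>i<n. \<exists>p \<in> set ps. p \<in> seg base i)"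

definition cidx :: "nat \<Rightarrow> nat \<Rightarrow> int \<Rightarrow> nat" where
  "cidx \<sigma> j d = nat ((int j + d) mod int \<sigma>)"

definition tour_cost :: "rpt list \<Rightarrow> real" where
  "tour_cost ps = (\<Sum>j<length ps. dist (ps ! j) (ps ! cidx (length ps) j 1))"

definition tour_curve :: "rpt list \<Rightarrow> real \<Rightarrow> rpt" where
  "tour_curve ps t =
     (let \<sigma> = length ps; u = frac t * real \<sigma>; j = nat \<lfloor>u\<rfloor>; s = u - of_int \<lfloor>u\<rfloor>
      in (1 - s) *\<^sub>R (ps ! j) + s *\<^sub>R (ps ! cidx \<sigma> j 1))"

text \<open>Not self-crossing (weakly simple): the closed tour is a uniform limit of simple closed curves.\<close>
definition not_self_crossing :: "rpt list \<Rightarrow> bool" where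
  "not_self_crossing ps \<longleftrightarrow>
     (\<forall>\<epsilon>>0. \<exists>\<gamma>::real \<Rightarrow> rpt. continuous_on UNIV \<gamma> \<and> (\<forall>t. \<gamma> (t + 1) = \<gamma> t) \<and>
        inj_on \<gamma> {0..<1} \<and> (\<forall>t. dist (\<gamma> t) (tour_curve ps t) < \<epsilon>))"

definition is_OPT :: "nat \<Rightarrow> (nat \<Rightarrow> rpt) \<Rightarrow> rpt list \<Rightarrow> bool" where
  "is_OPT n base ps \<longleftrightarrow>
     is_tour n base ps \<and>
     (\<forall>qs. is_tour n base qs \<longrightarrow> tour_cost ps \<le> tour_cost qs) \<and>
     (\<forall>j<length ps. \<not> (\<exists>i<n. ps ! j \<in> seg base i \<and> ps ! cidx (length ps) j 1 \<in> seg base i)) \<and>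
     not_self_crossing ps"

definition tour_subpath :: "rpt list \<Rightarrow> nat \<Rightarrow> bool \<Rightarrow> nat \<Rightarrow> rpt list" where
  "tour_subpath ps j fwd k =
     map (\<lambda>i. ps ! cidx (length ps) j (if fwd then int i else - int i)) [0..<Suc k]"

definition path_pts :: "rpt list \<Rightarrow> rpt set" where
  "path_pts qs = (\<Union>i < length qs - 1. closed_segment (qs ! i) (qs ! Suc i))"

definition legs_on_line :: "rpt list \<Rightarrow> real \<Rightarrow> nat" where
  "legs_on_line qs c =
     card {i. i < length qs - 1 \<and> (\<exists>p \<in> open_segment (qs ! i) (qs ! Suc i). fst p = c)}"

definition shadow :: "rpt list \<Rightarrow> nat" where
  "shadow qs = Max (range (legs_on_line qs))"

definition path_above :: "rpt list \<Rightarrow> rpt list \<Rightarrow> real \<Rightarrow> real \<Rightarrow> bool" where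
  "path_above P1 P2 x0 x1 \<longleftrightarrow>
     (\<forall>c \<in> {x0..x1}. \<exists>p \<in> path_pts P1. fst p = c \<and>
        (\<forall>q \<in> path_pts P1 \<union> path_pts P2. fst q = c \<longrightarrow> snd q \<le> snd p))"

definition leg_above :: "rpt \<Rightarrow> rpt \<Rightarrow> rpt \<Rightarrow> bool" where
  "leg_above r a b \<longleftrightarrow>
     (\<forall>p \<in> closed_segment r a - {r}. \<forall>q \<in> closed_segment r b - {r}. snd p > snd q)"

definition right_reflection :: "rpt list \<Rightarrow> nat \<Rightarrow> bool" where
  "right_reflection ps j \<longleftrightarrow> j < length ps \<and>
     closed_segment (ps ! j) (ps ! cidx (length ps) j 1) \<subseteq> {p. fst p \<ge> fst (ps ! j)} \<and>
     closed_segment (ps ! j) (ps ! cidx (length ps) j (-1)) \<subseteq> {p. fst p \<ge> fst (ps ! j)}"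

end

theory Submission
  imports Defs "HOL-Analysis.Analysis"
begin


lemma tour_curve_leg:
  fixes ps :: "rpt list" and m :: int and s :: real
  assumes ne: "ps \<noteq> []" and s0: "0 \<le> s" and s1: "s < 1"
  shows "tour_curve ps ((of_int m + s) / real (length ps)) =
     (1 - s) *\<^sub>R ps ! nat (m mod int (length ps)) + s *\<^sub>R ps ! nat ((m+1) mod int (length ps))"
proof -
  define \<sigma> where "\<sigma> = length ps"
  have sp: "\<sigma> > 0" using ne by (simp add: \<sigma>_def)
  define y where "y = (of_int m + s) / real \<sigma>"
  define q where "q = \<lfloor>y\<rfloor>"
  define u where "u = frac y * real \<sigma>"
  have u_eq: "u = of_int (m - q * int \<sigma>) + s"
    using sp by (simp add: u_def frac_def q_def y_def field_simps)
  have fl: "\<lfloor>u\<rfloor> = m - q * int \<sigma>"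
    by (rule floor_unique) (use u_eq s0 s1 in auto)
  have u0: "0 \<le> u" and u1: "u < real \<sigma>"
    using sp frac_lt_1[of y] by (auto simp: u_def)
  have r0: "0 \<le> m - q * int \<sigma>" using fl u0 by linarith
  have r1: "m - q * int \<sigma> < int \<sigma>" using fl u1
    by (metis floor_less_iff of_int_of_nat_eq)
  have md: "m mod int \<sigma> = m - q * int \<sigma>"
  proof -
    have "(m - q * int \<sigma>) mod int \<sigma> = m - q * int \<sigma>" using r0 r1 by simp
    moreover have "(m - q * int \<sigma>) mod int \<sigma> = m mod int \<sigma>" by (simp add: mod_diff_eq[symmetric])
    ultimately show ?thesis by simp
  qed
  have md1: "(int (nat (m - q * int \<sigma>)) + 1) mod int \<sigma> = (m+1) mod int \<sigma>"
    using r0 by (metis (no_types, lifting) add.commute add_diff_eq mod_diff_eq mod_mult_self2 mod_mult_self2_is_0 diff_zero nat_0_le int_nat_eq mod_add_eq mod_mod_trivial diff_add_cancel)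
  have "u - of_int \<lfloor>u\<rfloor> = s" using fl u_eq by simp
  then show ?thesis
    unfolding tour_curve_def Let_def \<sigma>_def[symmetric] y_def[symmetric] u_def[symmetric]
    using fl md md1 by (simp add: cidx_def)
qed

lemma tour_curve_leg1:
  fixes ps :: "rpt list" and m :: int and s :: real
  assumes ne: "ps \<noteq> []" and s0: "0 \<le> s" and s1: "s \<le> 1"
  shows "tour_curve ps ((of_int m + s) / real (length ps)) =
     (1 - s) *\<^sub>R ps ! nat (m mod int (length ps)) + s *\<^sub>R ps ! nat ((m+1) mod int (length ps))"
proof (cases "s = 1")
  case True
  have "tour_curve ps ((of_int m + s) / real (length ps)) = tour_curve ps ((of_int (m+1) + 0) / real (length ps))"
    using True by simp
  also have "\<dots> = ps ! nat ((m+1) mod int (length ps))"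
    using tour_curve_leg[OF ne, of 0 "m+1"] by simp
  finally show ?thesis using True by simp
next
  case False
  then show ?thesis using tour_curve_leg[OF ne s0] s1 by simp
qed

lemma tour_curve_periodic:
  "tour_curve ps (t + of_int k) = tour_curve ps t"
  by (simp add: tour_curve_def)

lemma periodic_int:
  fixes \<gamma> :: "real \<Rightarrow> 'a"
  assumes per: "\<And>t. \<gamma> (t + 1) = \<gamma> t"
  shows "\<gamma> (t + of_int k) = \<gamma> t"
proof -
  have nat: "\<gamma> (x + real n) = \<gamma> x" for x n
  proof (induction n)
    case (Suc n)
    have "\<gamma> (x + real (Suc n)) = \<gamma> ((x + real n) + 1)" by (simp add: algebra_simps)
    also have "\<dots> = \<gamma> x" using per Suc by simp
    finally show ?case .
  qed simp
  show ?thesis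
  proof (cases "k \<ge> 0")
    case True
    then show ?thesis using nat[of t "nat k"] by simp
  next
    case False
    have "\<gamma> (t + of_int k) = \<gamma> (t + of_int k + real (nat (-k)))" using nat by simp
    also have "\<dots> = \<gamma> t" using False by simp
    finally show ?thesis .
  qed
qed

lemma periodic_inj:
  fixes \<gamma> :: "real \<Rightarrow> 'a"
  assumes per: "\<And>t. \<gamma> (t + 1) = \<gamma> t" and inj: "inj_on \<gamma> {0..<1}"
    and eq: "\<gamma> t1 = \<gamma> t2"
  shows "\<exists>k::int. t1 - t2 = of_int k"
proof -
  have "\<gamma> t = \<gamma> (frac t)" for t
    using periodic_int[of \<gamma> "frac t" "\<lfloor>t\<rfloor>"] per by (simp add: frac_def)
  then have "\<gamma> (frac t1) = \<gamma> (frac t2)" using eq by simp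
  then have "frac t1 = frac t2" using inj frac_lt_1 frac_ge_0
    by (metis atLeastLessThan_iff inj_on_def)
  then have "t1 - t2 = of_int (\<lfloor>t1\<rfloor> - \<lfloor>t2\<rfloor>)" by (simp add: frac_def)
  then show ?thesis by blast
qed



definition lipg :: "real \<Rightarrow> rpt set \<Rightarrow> bool" where
  "lipg K S \<longleftrightarrow> (\<forall>p\<in>S. \<forall>q\<in>S. \<bar>snd p - snd q\<bar> \<le> K * \<bar>fst p - fst q\<bar>)"

definition plpts :: "(nat \<Rightarrow> rpt) \<Rightarrow> nat \<Rightarrow> rpt set" where
  "plpts v k = (\<Union>i<k. closed_segment (v i) (v (Suc i)))"

lemma seg_fst:
  fixes p u w :: rpt
  assumes "p \<in> closed_segment u w" "fst u \<le> fst w"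
  shows "fst u \<le> fst p \<and> fst p \<le> fst w"
proof -
  have "fst p \<in> closed_segment (fst u) (fst w)"
    using closed_segment_PairD[of "fst p" "snd p" "fst u" "snd u" "fst w" "snd w"] assms by simp
  then show ?thesis using assms(2) by (simp add: closed_segment_eq_real_ivl)
qed

lemma seg_point_x:
  fixes u w :: rpt
  assumes "fst u < fst w" "fst u \<le> x" "x \<le> fst w"
  shows "(1 - (x - fst u) / (fst w - fst u)) *\<^sub>R u + ((x - fst u) / (fst w - fst u)) *\<^sub>R w \<in> closed_segment u w
     \<and> fst ((1 - (x - fst u) / (fst w - fst u)) *\<^sub>R u + ((x - fst u) / (fst w - fst u)) *\<^sub>R w) = x"
proof
  define t where "t = (x - fst u) / (fst w - fst u)"
  have t0: "0 \<le> t" "t \<le> 1" using assms by (auto simp: t_def divide_simps)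
  show "(1 - (x - fst u) / (fst w - fst u)) *\<^sub>R u + ((x - fst u) / (fst w - fst u)) *\<^sub>R w \<in> closed_segment u w"
    using t0 unfolding t_def[symmetric] closed_segment_def by auto
  have tt: "t * (fst w - fst u) = x - fst u" using assms by (simp add: t_def)
  have "(1 - t) * fst u + t * fst w = fst u + t * (fst w - fst u)" by (simp add: algebra_simps)
  then have "(1 - t) * fst u + t * fst w = x" using tt by simp
  then show "fst ((1 - (x - fst u) / (fst w - fst u)) *\<^sub>R u + ((x - fst u) / (fst w - fst u)) *\<^sub>R w) = x"
    unfolding t_def[symmetric] by simp
qed

lemma open_seg_x:
  fixes u w :: rpt
  assumes "fst u < c" "c < fst w"
  shows "\<exists>p\<in>open_segment u w. fst p = c"
proof -
  define t where "t = (c - fst u) / (fst w - fst u)"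
  have t0: "0 < t" "t < 1" using assms by (auto simp: t_def divide_simps)
  have ne: "u \<noteq> w" using assms by auto
  have tt: "t * (fst w - fst u) = c - fst u" using assms by (simp add: t_def)
  have "(1 - t) * fst u + t * fst w = fst u + t * (fst w - fst u)" by (simp add: algebra_simps)
  then have "(1 - t) * fst u + t * fst w = c" using tt by simp
  moreover have "(1 - t) *\<^sub>R u + t *\<^sub>R w \<in> open_segment u w"
    using t0 ne by (auto simp: in_segment)
  ultimately show ?thesis by (intro bexI[of _ "(1 - t) *\<^sub>R u + t *\<^sub>R w"]) auto
qed

lemma open_seg_x':
  fixes u w :: rpt
  assumes "fst w < c" "c < fst u"
  shows "\<exists>p\<in>open_segment u w. fst p = c"
  using open_seg_x[OF assms] by (simp add: open_segment_commute)

lemma lip_seg: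
  fixes u w :: rpt
  assumes "fst u < fst w" "L \<ge> \<bar>snd w - snd u\<bar> / (fst w - fst u)"
  shows "lipg L (closed_segment u w)"
  unfolding lipg_def
proof (intro ballI)
  fix p q assume "p \<in> closed_segment u w" "q \<in> closed_segment u w"
  then obtain s s' where s: "0 \<le> s" "s \<le> 1" "p = (1 - s) *\<^sub>R u + s *\<^sub>R w"
    and s': "0 \<le> s'" "s' \<le> 1" "q = (1 - s') *\<^sub>R u + s' *\<^sub>R w"
    unfolding closed_segment_def by auto
  have dy: "snd p - snd q = (s - s') * (snd w - snd u)" by (simp only: s(3) s'(3)) (simp add: algebra_simps)
  have dx: "fst p - fst q = (s - s') * (fst w - fst u)" by (simp only: s(3) s'(3)) (simp add: algebra_simps)
  have "\<bar>snd p - snd q\<bar> = \<bar>s - s'\<bar> * \<bar>snd w - snd u\<bar>" by (simp add: dy abs_mult)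
  also have "\<dots> = \<bar>s - s'\<bar> * (fst w - fst u) * (\<bar>snd w - snd u\<bar> / (fst w - fst u))"
    using assms(1) by simp
  also have "\<dots> \<le> \<bar>s - s'\<bar> * (fst w - fst u) * L"
    using assms by (intro mult_left_mono) auto
  also have "\<dots> = L * \<bar>fst p - fst q\<bar>" using assms(1) by (simp add: dx abs_mult)
  finally show "\<bar>snd p - snd q\<bar> \<le> L * \<bar>fst p - fst q\<bar>" .
qed

lemma lip_union:
  assumes "lipg L S1" "lipg L S2" "z \<in> S1" "z \<in> S2" "\<forall>p\<in>S1. fst p \<le> fst z" "\<forall>q\<in>S2. fst z \<le> fst q"
    "L \<ge> 0"
  shows "lipg L (S1 \<union> S2)"
  unfolding lipg_def
proof (intro ballI)
  have key: "\<bar>snd p - snd q\<bar> \<le> L * \<bar>fst p - fst q\<bar>" if "p \<in> S1" "q \<in> S2" for p q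
  proof -
    have "\<bar>snd p - snd z\<bar> \<le> L * \<bar>fst p - fst z\<bar>" using assms that unfolding lipg_def by blast
    moreover have "\<bar>snd z - snd q\<bar> \<le> L * \<bar>fst z - fst q\<bar>" using assms that unfolding lipg_def by blast
    moreover have "fst p \<le> fst z" "fst z \<le> fst q" using assms(5,6) that by auto
    then have "\<bar>fst p - fst z\<bar> + \<bar>fst z - fst q\<bar> = \<bar>fst p - fst q\<bar>" by linarith
    ultimately show ?thesis by (smt (verit, best) distrib_left)
  qed
  fix p q assume "p \<in> S1 \<union> S2" "q \<in> S1 \<union> S2"
  then show "\<bar>snd p - snd q\<bar> \<le> L * \<bar>fst p - fst q\<bar>"
    using assms key[of p q] key[of q p] unfolding lipg_def by (auto simp: abs_minus_commute)
qed

locale polyl =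
  fixes v :: "nat \<Rightarrow> rpt" and k :: nat
  assumes k1: "1 \<le> k" and inc: "\<And>i. i < k \<Longrightarrow> fst (v i) < fst (v (Suc i))"
begin

lemma mono_le: "i \<le> i' \<Longrightarrow> i' \<le> k \<Longrightarrow> fst (v i) \<le> fst (v i')"
proof (induction i' rule: dec_induct)
  case (step m) then show ?case using inc[of m] by simp
qed simp

lemma mono_less: "i < i' \<Longrightarrow> i' \<le> k \<Longrightarrow> fst (v i) < fst (v i')"
  using mono_le[of "Suc i" i'] inc[of i] by simp

lemma pts_bounds: "p \<in> plpts v n \<Longrightarrow> n \<le> k \<Longrightarrow> fst (v 0) \<le> fst p \<and> fst p \<le> fst (v n)"
proof -
  assume "p \<in> plpts v n" "n \<le> k"
  then obtain i where i: "i < n" "p \<in> closed_segment (v i) (v (Suc i))" by (auto simp: plpts_def)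
  have "fst (v i) \<le> fst p \<and> fst p \<le> fst (v (Suc i))"
    using seg_fst[OF i(2)] inc[of i] i \<open>n \<le> k\<close> by simp
  moreover have "fst (v 0) \<le> fst (v i)" "fst (v (Suc i)) \<le> fst (v n)"
    using mono_le i \<open>n \<le> k\<close> by auto
  ultimately show ?thesis by linarith
qed

definition KK where "KK = (\<Sum>i<k. \<bar>snd (v (Suc i)) - snd (v i)\<bar> / (fst (v (Suc i)) - fst (v i)))"

lemma KK_ge: "i < k \<Longrightarrow> \<bar>snd (v (Suc i)) - snd (v i)\<bar> / (fst (v (Suc i)) - fst (v i)) \<le> KK"
  unfolding KK_def
  by (rule member_le_sum) (use inc in \<open>auto intro!: divide_nonneg_pos\<close>)

lemma KK_nonneg: "KK \<ge> 0"
  unfolding KK_def by (rule sum_nonneg) (use inc in \<open>auto intro!: divide_nonneg_pos\<close>)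

lemma lip_n: "n \<le> k \<Longrightarrow> lipg KK (plpts v n)"
proof (induction n)
  case 0 then show ?case by (simp add: plpts_def lipg_def)
next
  case (Suc n)
  have eq: "plpts v (Suc n) = plpts v n \<union> closed_segment (v n) (v (Suc n))"
    by (auto simp: plpts_def lessThan_Suc)
  have ls: "lipg KK (closed_segment (v n) (v (Suc n)))"
    using lip_seg[OF inc KK_ge] Suc by simp
  show ?case
  proof (cases n)
    case 0 then show ?thesis using ls by (simp add: plpts_def lessThan_Suc)
  next
    case (Suc m)
    have "v n \<in> plpts v n" using Suc by (auto simp: plpts_def intro!: bexI[of _ m])
    moreover have "\<forall>p\<in>plpts v n. fst p \<le> fst (v n)" using pts_bounds \<open>Suc n \<le> k\<close> by auto
    moreover have "\<forall>q\<in>closed_segment (v n) (v (Suc n)). fst (v n) \<le> fst q"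
      using seg_fst inc \<open>Suc n \<le> k\<close> by (metis Suc_le_lessD less_le)
    ultimately show ?thesis unfolding eq
      using lip_union[OF _ ls] Suc.IH \<open>Suc n \<le> k\<close> KK_nonneg by auto
  qed
qed

lemma lip: "lipg KK (plpts v k)" using lip_n by simp

lemma unique: "p \<in> plpts v k \<Longrightarrow> q \<in> plpts v k \<Longrightarrow> fst p = fst q \<Longrightarrow> p = q"
  using lip unfolding lipg_def by (metis abs_0_eq diff_self mult_zero_right abs_le_zero_iff eq_iff_diff_eq_0 prod_eqI)

lemma exists_pt: "fst (v 0) \<le> x \<Longrightarrow> x \<le> fst (v k) \<Longrightarrow> \<exists>p\<in>plpts v k. fst p = x"
proof -
  have "n \<le> k \<Longrightarrow> 1 \<le> n \<Longrightarrow> fst (v 0) \<le> x \<Longrightarrow> x \<le> fst (v n) \<Longrightarrow> \<exists>p\<in>plpts v n. fst p = x" for n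
  proof (induction n)
    case 0 then show ?case by simp
  next
    case (Suc n)
    show ?case
    proof (cases "x \<le> fst (v n) \<and> 1 \<le> n")
      case True
      then obtain p where "p \<in> plpts v n" "fst p = x" using Suc by auto
      then show ?thesis by (auto simp: plpts_def)
    next
      case False
      then have "fst (v n) \<le> x" using Suc by (cases n) auto
      have "fst (v n) < fst (v (Suc n))" using inc[of n] Suc by auto
      then obtain p where "p \<in> closed_segment (v n) (v (Suc n))" "fst p = x"
        using seg_point_x[of "v n" "v (Suc n)" x] \<open>fst (v n) \<le> x\<close> Suc.prems by blast
      then show ?thesis by (auto simp: plpts_def)
    qed
  qed
  then show "fst (v 0) \<le> x \<Longrightarrow> x \<le> fst (v k) \<Longrightarrow> \<exists>p\<in>plpts v k. fst p = x" using k1 by simp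
qed

end

locale polyc = polyl +
  fixes Pc :: "real \<Rightarrow> rpt"
  assumes leg: "\<And>i s. i < k \<Longrightarrow> 0 \<le> s \<Longrightarrow> s \<le> 1 \<Longrightarrow> Pc (real i + s) = (1-s) *\<^sub>R v i + s *\<^sub>R v (Suc i)"
begin

lemma decomp:
  assumes "0 \<le> \<tau>" "\<tau> < real k"
  shows "\<exists>i<k. \<exists>s. 0 \<le> s \<and> s < 1 \<and> \<tau> = real i + s"
proof -
  define i where "i = nat \<lfloor>\<tau>\<rfloor>"
  have "real i = of_int \<lfloor>\<tau>\<rfloor>" using assms by (simp add: i_def)
  then have "real i \<le> \<tau>" "\<tau> < real i + 1" by linarith+
  moreover have "i < k" using assms \<open>real i \<le> \<tau>\<close> by linarith
  ultimately show ?thesis by (intro exI[of _ i]) (auto intro!: exI[of _ "\<tau> - real i"])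
qed

lemma curve_in:
  assumes "0 \<le> \<tau>" "\<tau> \<le> real k"
  shows "Pc \<tau> \<in> plpts v k"
proof (cases "\<tau> = real k")
  case True
  have "Pc \<tau> = v k" using leg[of "k-1" 1] k1 True by (simp add: of_nat_diff)
  moreover have "v k \<in> closed_segment (v (k-1)) (v (Suc (k-1)))" using k1 by simp
  ultimately show ?thesis using k1 unfolding plpts_def by (intro UN_I[of "k-1"]) auto
next
  case False
  then have "\<tau> < real k" using assms by simp
  then obtain i s where "i < k" "0 \<le> s" "s < 1" "\<tau> = real i + s" using decomp assms(1) by blast
  then have "Pc \<tau> \<in> closed_segment (v i) (v (Suc i))"
    using leg[of i s] unfolding closed_segment_def by auto
  then show ?thesis using \<open>i < k\<close> unfolding plpts_def by blast
qed

lemma curve_0: "Pc 0 = v 0" using leg[of 0 0] k1 by simp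

lemma pts_curve:
  assumes "p \<in> plpts v k" shows "\<exists>\<tau>\<in>{0..real k}. Pc \<tau> = p"
proof -
  obtain i where i: "i < k" "p \<in> closed_segment (v i) (v (Suc i))" using assms by (auto simp: plpts_def)
  then obtain s where "0 \<le> s" "s \<le> 1" "p = (1-s) *\<^sub>R v i + s *\<^sub>R v (Suc i)"
    unfolding closed_segment_def by auto
  then show ?thesis using leg[of i s] i by (intro bexI[of _ "real i + s"]) auto
qed

lemma exists_tau: "fst (v 0) \<le> x \<Longrightarrow> x \<le> fst (v k) \<Longrightarrow> \<exists>\<tau>\<in>{0..real k}. fst (Pc \<tau>) = x"
  using exists_pt pts_curve by metis

lemma fst_leg: "i < k \<Longrightarrow> 0 \<le> s \<Longrightarrow> s \<le> 1 \<Longrightarrow> fst (Pc (real i + s)) = fst (v i) + s * (fst (v (Suc i)) - fst (v i))"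
  by (subst leg) (simp_all add: algebra_simps)

lemma strict:
  assumes "0 \<le> \<tau>" "\<tau> < \<tau>'" "\<tau>' \<le> real k"
  shows "fst (Pc \<tau>) < fst (Pc \<tau>')"
proof -
  have "\<tau> < real k" using assms by simp
  then obtain i s where hi: "i < k" "0 \<le> s" "s < 1" "\<tau> = real i + s" using decomp assms(1) by blast
  obtain i' s' where hi': "i' < k" "0 \<le> s'" "s' \<le> 1" "\<tau>' = real i' + s'"
  proof (cases "\<tau>' = real k")
    case True then show ?thesis using that[of "k-1" 1] k1 by (simp add: of_nat_diff)
  next
    case False
    then have "0 \<le> \<tau>'" "\<tau>' < real k" using assms by auto
    then obtain i s where "i < k" "0 \<le> s" "s < 1" "\<tau>' = real i + s" using decomp by blast
    then show ?thesis using that[of i s] by simp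
  qed
  have i_le: "i \<le> i'" using hi hi' assms by linarith
  have x1: "fst (Pc \<tau>) = fst (v i) + s * (fst (v (Suc i)) - fst (v i))" using fst_leg hi by simp
  have x2: "fst (Pc \<tau>') = fst (v i') + s' * (fst (v (Suc i')) - fst (v i'))" using fst_leg hi' by simp
  have d: "fst (v i) < fst (v (Suc i))" "fst (v i') < fst (v (Suc i'))" using inc hi hi' by auto
  show ?thesis
  proof (cases "i = i'")
    case True
    then have "s < s'" using hi hi' assms by simp
    then show ?thesis using x1 x2 d True by (simp add: mult_strict_right_mono)
  next
    case False
    then have "fst (v (Suc i)) \<le> fst (v i')" using mono_le i_le hi' by simp
    moreover have "s * (fst (v (Suc i)) - fst (v i)) < fst (v (Suc i)) - fst (v i)"
      using hi d by simp
    moreover have "0 \<le> s' * (fst (v (Suc i')) - fst (v i'))" using hi' d by simp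
    ultimately show ?thesis using x1 x2 by linarith
  qed
qed

lemma mono_tau:
  assumes "0 \<le> \<tau>" "\<tau> \<le> real k" "0 \<le> \<tau>'" "\<tau>' \<le> real k" "fst (Pc \<tau>) < fst (Pc \<tau>')"
  shows "\<tau> < \<tau>'"
proof (rule ccontr)
  assume "\<not> \<tau> < \<tau>'"
  then consider "\<tau> = \<tau>'" | "\<tau>' < \<tau>" by linarith
  then show False using strict[of \<tau>' \<tau>] assms by cases auto
qed

end



definition h2 :: "rpt \<Rightarrow> real^2" where "h2 z = (\<chi> i. if i = 1 then fst z else snd z)"

lemma h2_1[simp]: "h2 z $ 1 = fst z" by (simp add: h2_def)
lemma h2_2[simp]: "h2 z $ 2 = snd z" by (simp add: h2_def)
lemma h2_cont: "continuous_on S h2"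
  unfolding h2_def
proof (intro continuous_on_vec_lambda)
  fix i :: 2
  show "continuous_on S (\<lambda>x. if i = 1 then fst x else snd x)"
    by (cases "i = 1") (auto intro: continuous_intros)
qed
lemma h2_inj: "h2 p = h2 q \<Longrightarrow> p = q"
  by (metis h2_1 h2_2 prod_eqI)
lemma h2_cbox': "h2 z \<in> cbox (h2 a) (h2 b) \<longleftrightarrow> fst a \<le> fst z \<and> fst z \<le> fst b \<and> snd a \<le> snd z \<and> snd z \<le> snd b"
  by (simp add: mem_box_cart(2) forall_2)
lemma cbox_rpt: "(z::rpt) \<in> cbox a b \<longleftrightarrow> fst a \<le> fst z \<and> fst z \<le> fst b \<and> snd a \<le> snd z \<and> snd z \<le> snd b"
  by (cases a, cases b, cases z) auto
lemma h2_cbox: "h2 z \<in> cbox (h2 a) (h2 b) \<longleftrightarrow> z \<in> cbox a b"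
  using h2_cbox' cbox_rpt by simp

lemma fashoda_rr:
  fixes f g :: "real \<Rightarrow> rpt"
  assumes "path f" "path g" "path_image f \<subseteq> cbox a b" "path_image g \<subseteq> cbox a b"
    "fst (pathstart f) = fst a" "fst (pathfinish f) = fst b"
    "snd (pathstart g) = snd a" "snd (pathfinish g) = snd b"
  shows "path_image f \<inter> path_image g \<noteq> {}"
proof -
  have pf: "path (h2 \<circ> f)" "path (h2 \<circ> g)"
    using assms(1,2) path_continuous_image h2_cont by blast+
  have cb: "path_image (h2 \<circ> f) \<subseteq> cbox (h2 a) (h2 b)" "path_image (h2 \<circ> g) \<subseteq> cbox (h2 a) (h2 b)"
    using assms(3,4) by (auto simp: path_image_compose h2_cbox)
  have c: "(pathstart (h2 \<circ> f))$1 = (h2 a)$1" "(pathfinish (h2 \<circ> f))$1 = (h2 b)$1"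
     "(pathstart (h2 \<circ> g))$2 = (h2 a)$2" "(pathfinish (h2 \<circ> g))$2 = (h2 b)$2"
    using assms(5-8) by (simp_all add: pathstart_compose pathfinish_compose)
  obtain z where "z \<in> path_image (h2 \<circ> f)" "z \<in> path_image (h2 \<circ> g)"
    using fashoda[OF pf cb c] by blast
  then obtain p q where "p \<in> path_image f" "q \<in> path_image g" "h2 p = h2 q"
    by (auto simp: path_image_compose)
  then show ?thesis using h2_inj by blast
qed

lemma hseg: "(z::rpt) \<in> closed_segment (x0, y) (x1, y) \<Longrightarrow> snd z = y \<and> fst z \<in> closed_segment x0 x1"
  using closed_segment_PairD[of "fst z" "snd z" x0 y x1 y] by simp
lemma vseg: "(z::rpt) \<in> closed_segment (x, y0) (x, y1) \<Longrightarrow> fst z = x \<and> snd z \<in> closed_segment y0 y1"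
  using closed_segment_PairD[of "fst z" "snd z" x y0 x y1] by simp

lemma crossing:
  fixes A B :: "real \<Rightarrow> rpt"
  assumes pA: "path A" and pB: "path B" and disj: "path_image A \<inter> path_image B = {}"
  and h2: "\<forall>q\<in>path_image B. fst q \<le> fst (pathstart A) \<longrightarrow> snd q < snd (pathstart A)"
  and h3: "snd (pathstart B) < snd (pathstart A)"
  and h4: "fst (pathstart A) < fst (pathfinish B)"
  and h5: "\<forall>q\<in>path_image B. fst (pathfinish A) \<le> fst q \<longrightarrow> snd (pathfinish A) < snd q"
  and h6: "snd (pathfinish A) < snd (pathfinish B)"
  and h7: "fst (pathstart B) < fst (pathfinish A)"
  and h8: "\<forall>p\<in>path_image A. fst p = fst (pathstart B) \<longrightarrow> snd (pathstart B) < snd p"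
  and h9: "\<forall>p\<in>path_image A. fst p = fst (pathfinish B) \<longrightarrow> snd p < snd (pathfinish B)"
  shows False
proof -
  have "compact (path_image A \<union> path_image B)" using pA pB by (intro compact_Un) auto
  then obtain M0 where M0: "\<And>z. z \<in> path_image A \<union> path_image B \<Longrightarrow> norm z \<le> M0"
    using compact_imp_bounded bounded_iff by metis
  define M where "M = \<bar>M0\<bar> + 1"
  have bnd: "\<bar>fst z\<bar> < M \<and> \<bar>snd z\<bar> < M" if "z \<in> path_image A \<union> path_image B" for z
  proof -
    have "norm z \<le> M0" using M0 that by blast
    moreover have "\<bar>fst z\<bar> \<le> norm z" "\<bar>snd z\<bar> \<le> norm z"
      using dist_fst_le[of z 0] dist_snd_le[of z 0] by (auto simp: dist_norm)
    ultimately show ?thesis unfolding M_def by linarith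
  qed
  define a0 where "a0 = pathstart A"
  define a1 where "a1 = pathfinish A"
  define b0 where "b0 = pathstart B"
  define b1 where "b1 = pathfinish B"
  have inA: "a0 \<in> path_image A" "a1 \<in> path_image A" unfolding a0_def a1_def by auto
  have inB: "b0 \<in> path_image B" "b1 \<in> path_image B" unfolding b0_def b1_def by auto
  define f where "f = linepath (-M, snd a0) a0 +++ A +++ linepath a1 (M, snd a1)"
  define g where "g = linepath (fst b0, -M) b0 +++ B +++ linepath b1 (fst b1, M)"
  have pf: "path f" unfolding f_def a0_def a1_def using pA by simp
  have pg: "path g" unfolding g_def b0_def b1_def using pB by simp
  have imf: "path_image f = closed_segment (-M, snd a0) a0 \<union> path_image A \<union> closed_segment a1 (M, snd a1)"
    unfolding f_def a0_def a1_def by (simp add: path_image_join Un_assoc)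
  have img: "path_image g = closed_segment (fst b0, -M) b0 \<union> path_image B \<union> closed_segment b1 (fst b1, M)"
    unfolding g_def b0_def b1_def by (simp add: path_image_join Un_assoc)
  define R where "R = cbox (-M, -M) (M, M)"
  have inR: "z \<in> R" if "z \<in> path_image A \<union> path_image B" for z
    using bnd[OF that] unfolding R_def cbox_rpt by auto
  have cR: "convex R" unfolding R_def by (rule convex_box)
  have b4: "\<bar>fst a0\<bar> < M \<and> \<bar>snd a0\<bar> < M" "\<bar>fst a1\<bar> < M \<and> \<bar>snd a1\<bar> < M"
     "\<bar>fst b0\<bar> < M \<and> \<bar>snd b0\<bar> < M" "\<bar>fst b1\<bar> < M \<and> \<bar>snd b1\<bar> < M"
    using bnd inA inB by blast+
  have eR: "(-M, snd a0) \<in> R" "(M, snd a1) \<in> R" "(fst b0, -M) \<in> R" "(fst b1, M) \<in> R"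
    using b4 unfolding R_def cbox_rpt by (auto simp: abs_less_iff)
  have sf: "path_image f \<subseteq> R" unfolding imf
    using closed_segment_subset[OF _ _ cR] eR inR inA by auto
  have sg: "path_image g \<subseteq> R" unfolding img
    using closed_segment_subset[OF _ _ cR] eR inR inB by auto
  have "path_image f \<inter> path_image g \<noteq> {}"
    by (rule fashoda_rr[OF pf pg sf[unfolded R_def] sg[unfolded R_def]])
       (simp_all add: f_def g_def)
  then obtain z where zf: "z \<in> path_image f" and zg: "z \<in> path_image g" by blast
  have lA: "-M < fst a0" "fst a1 < M" "-M < snd b0" "snd b1 < M" using b4 by (auto simp: abs_less_iff)
  show False
    using zf zg unfolding imf img
  proof (elim UnE)
    assume z1: "z \<in> closed_segment (-M, snd a0) a0"
    then have zz1: "snd z = snd a0" "fst z \<le> fst a0"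
      using hseg[of z "-M" "snd a0" "fst a0"] lA by (auto simp: closed_segment_eq_real_ivl)
    { assume "z \<in> closed_segment (fst b0, -M) b0"
      then have "fst z = fst b0" "snd z \<le> snd b0"
        using vseg[of z "fst b0" "-M" "snd b0"] lA by (auto simp: closed_segment_eq_real_ivl)
      then show False using zz1 h3 unfolding a0_def b0_def by linarith }
    { assume "z \<in> path_image B" then show False using zz1 h2 unfolding a0_def by force }
    { assume "z \<in> closed_segment b1 (fst b1, M)"
      then have "fst z = fst b1" "snd b1 \<le> snd z"
        using vseg[of z "fst b1" "snd b1" M] lA by (auto simp: closed_segment_eq_real_ivl)
      then show False using zz1 h4 unfolding a0_def b1_def by linarith }
  next
    assume z1: "z \<in> path_image A"
    { assume "z \<in> closed_segment (fst b0, -M) b0"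
      then have "fst z = fst b0" "snd z \<le> snd b0"
        using vseg[of z "fst b0" "-M" "snd b0"] lA by (auto simp: closed_segment_eq_real_ivl)
      then show False using z1 h8 unfolding b0_def by force }
    { assume "z \<in> path_image B" then show False using z1 disj by blast }
    { assume "z \<in> closed_segment b1 (fst b1, M)"
      then have "fst z = fst b1" "snd b1 \<le> snd z"
        using vseg[of z "fst b1" "snd b1" M] lA by (auto simp: closed_segment_eq_real_ivl)
      then show False using z1 h9 unfolding b1_def by force }
  next
    assume z1: "z \<in> closed_segment a1 (M, snd a1)"
    then have zz1: "snd z = snd a1" "fst a1 \<le> fst z"
      using hseg[of z "fst a1" "snd a1" M] lA by (auto simp: closed_segment_eq_real_ivl)
    { assume "z \<in> closed_segment (fst b0, -M) b0"
      then have "fst z = fst b0" "snd z \<le> snd b0"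
        using vseg[of z "fst b0" "-M" "snd b0"] lA by (auto simp: closed_segment_eq_real_ivl)
      then show False using zz1 h7 unfolding a1_def b0_def by linarith }
    { assume "z \<in> path_image B" then show False using zz1 h5 unfolding a1_def by force }
    { assume "z \<in> closed_segment b1 (fst b1, M)"
      then have "fst z = fst b1" "snd b1 \<le> snd z"
        using vseg[of z "fst b1" "snd b1" M] lA by (auto simp: closed_segment_eq_real_ivl)
      then show False using zz1 h6 unfolding a1_def b1_def by linarith }
  qed
qed



definition dd :: "bool \<Rightarrow> int" where "dd fw = (if fw then 1 else -1)"
definition vtx :: "rpt list \<Rightarrow> nat \<Rightarrow> bool \<Rightarrow> nat \<Rightarrow> rpt" where
  "vtx ps j fw i = ps ! nat ((int j + dd fw * int i) mod int (length ps))"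
definition PC :: "rpt list \<Rightarrow> nat \<Rightarrow> bool \<Rightarrow> real \<Rightarrow> rpt" where
  "PC ps j fw \<tau> = tour_curve ps ((real j + real_of_int (dd fw) * \<tau>) / real (length ps))"

lemma subpath_len: "length (tour_subpath ps j fw k) = Suc k"
  by (simp add: tour_subpath_def)

lemma subpath_nth: "i \<le> k \<Longrightarrow> tour_subpath ps j fw k ! i = vtx ps j fw i"
  by (simp add: tour_subpath_def vtx_def cidx_def dd_def nth_map less_Suc_eq_le del: upt_Suc)

lemma path_pts_sub: "path_pts (tour_subpath ps j fw k) = plpts (vtx ps j fw) k"
  unfolding path_pts_def plpts_def subpath_len
  by (rule SUP_cong) (auto simp: subpath_nth)

lemma legs_sub: "legs_on_line (tour_subpath ps j fw k) c =
   card {i. i < k \<and> (\<exists>p\<in>open_segment (vtx ps j fw i) (vtx ps j fw (Suc i)). fst p = c)}"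
  unfolding legs_on_line_def subpath_len
  by (intro arg_cong[where f=card]) (auto simp: subpath_nth)

lemma legs_le_shadow: "legs_on_line qs c \<le> shadow qs"
proof -
  have "range (legs_on_line qs) \<subseteq> {..length qs}"
  proof
    fix x assume "x \<in> range (legs_on_line qs)"
    then obtain c where "x = legs_on_line qs c" by auto
    moreover have "card {i. i < length qs - 1 \<and> (\<exists>p \<in> open_segment (qs ! i) (qs ! Suc i). fst p = c)} \<le> card {..<length qs - 1}"
      by (intro card_mono) auto
    ultimately show "x \<in> {..length qs}" by (simp add: legs_on_line_def)
  qed
  then have "finite (range (legs_on_line qs))" using finite_subset by blast
  then show ?thesis unfolding shadow_def by (intro Max_ge) auto
qed

lemma PC_leg:
  assumes "ps \<noteq> []" "0 \<le> s" "s \<le> 1"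
  shows "PC ps j fw (real i + s) = (1-s) *\<^sub>R vtx ps j fw i + s *\<^sub>R vtx ps j fw (Suc i)"
proof (cases fw)
  case True
  have "real j + real_of_int (dd fw) * (real i + s) = of_int (int j + int i) + s"
    using True by (simp add: dd_def)
  then show ?thesis using tour_curve_leg1[OF assms, of "int j + int i"] True
    by (simp add: PC_def vtx_def dd_def ac_simps)
next
  case False
  have d: "dd fw = -1" using False by (simp add: dd_def)
  have v0: "vtx ps j fw i = ps ! nat ((int j - int i - 1 + 1) mod int (length ps))"
  proof -
    have "int j + dd fw * int i = int j - int i - 1 + 1" using d by simp
    then show ?thesis unfolding vtx_def by metis
  qed
  have v1: "vtx ps j fw (Suc i) = ps ! nat ((int j - int i - 1) mod int (length ps))"
  proof -
    have "int j + dd fw * int (Suc i) = int j - int i - 1" using d by simp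
    then show ?thesis unfolding vtx_def by metis
  qed
  have "real j + real_of_int (dd fw) * (real i + s) = of_int (int j - int i - 1) + (1 - s)"
    using d by simp
  then have "PC ps j fw (real i + s) = tour_curve ps ((of_int (int j - int i - 1) + (1 - s)) / real (length ps))"
    unfolding PC_def by metis
  also have "\<dots> = (1 - (1 - s)) *\<^sub>R ps ! nat ((int j - int i - 1) mod int (length ps))
      + (1 - s) *\<^sub>R ps ! nat ((int j - int i - 1 + 1) mod int (length ps))"
    by (rule tour_curve_leg1) (use assms in auto)
  finally show ?thesis unfolding v0 v1 by (simp add: add.commute)
qed

lemma PC_shift:
  assumes "ps \<noteq> []"
  shows "PC ps j fw \<tau> = PC ps j (\<not> fw) (real (length ps) - \<tau>)"
proof -
  have "(real j + real_of_int (dd (\<not> fw)) * (real (length ps) - \<tau>)) / real (length ps)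
      = (real j + real_of_int (dd fw) * \<tau>) / real (length ps) + of_int (- dd fw)"
    using assms by (cases fw) (simp_all add: dd_def field_simps)
  then show ?thesis unfolding PC_def by (simp only: tour_curve_periodic)
qed

lemma vtx0: "j < length ps \<Longrightarrow> vtx ps j fw 0 = ps ! j"
  by (simp add: vtx_def)

lemma vtx1: "vtx ps j fw 1 = ps ! cidx (length ps) j (if fw then 1 else -1)"
  by (simp add: vtx_def cidx_def dd_def)

lemma nonvert:
  assumes vi: "valid_instance n base" and op: "is_OPT n base ps"
  shows "fst (ps ! nat (m mod int (length ps))) \<noteq> fst (ps ! nat ((m+1) mod int (length ps)))"
proof
  assume eq: "fst (ps ! nat (m mod int (length ps))) = fst (ps ! nat ((m+1) mod int (length ps)))"
  have ne: "ps \<noteq> []" using op by (simp add: is_OPT_def is_tour_def)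
  define jj where "jj = nat (m mod int (length ps))"
  have jj: "jj < length ps" using ne by (simp add: jj_def nat_less_iff)
  have cj: "cidx (length ps) jj 1 = nat ((m+1) mod int (length ps))"
    using ne by (simp add: cidx_def jj_def mod_add_left_eq)
  have onseg: "\<forall>p\<in>set ps. \<exists>i<n. p \<in> seg base i" using op by (simp add: is_OPT_def is_tour_def)
  have c1: "cidx (length ps) jj 1 < length ps" using ne by (simp add: cidx_def nat_less_iff)
  obtain i1 where i1: "i1 < n" "ps ! jj \<in> seg base i1" using onseg jj by (meson nth_mem)
  obtain i2 where i2: "i2 < n" "ps ! cidx (length ps) jj 1 \<in> seg base i2" using onseg c1 by (meson nth_mem)
  have fs: "p \<in> seg base i \<Longrightarrow> fst p = fst (base i)" for p i
    unfolding seg_def by (auto simp: closed_segment_def algebra_simps)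
  have "fst (base i1) = fst (base i2)" using fs[OF i1(2)] fs[OF i2(2)] eq cj jj_def by simp
  then have "i1 = i2" using vi i1 i2 unfolding valid_instance_def inj_on_def by auto
  then show False using op jj i1 i2 unfolding is_OPT_def by blast
qed

lemma vtx_nonvert:
  assumes "valid_instance n base" "is_OPT n base ps"
  shows "fst (vtx ps j fw i) \<noteq> fst (vtx ps j fw (Suc i))"
proof (cases fw)
  case True
  then show ?thesis using nonvert[OF assms, of "int j + int i"] by (simp add: vtx_def dd_def ac_simps)
next
  case False
  have d: "dd fw = -1" using False by (simp add: dd_def)
  have v0: "vtx ps j fw i = ps ! nat ((int j - int i - 1 + 1) mod int (length ps))"
  proof -
    have "int j + dd fw * int i = int j - int i - 1 + 1" using d by simp
    then show ?thesis unfolding vtx_def by metis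
  qed
  have v1: "vtx ps j fw (Suc i) = ps ! nat ((int j - int i - 1) mod int (length ps))"
  proof -
    have "int j + dd fw * int (Suc i) = int j - int i - 1" using d by simp
    then show ?thesis unfolding vtx_def by metis
  qed
  show ?thesis using nonvert[OF assms, of "int j - int i - 1"] unfolding v0 v1 by metis
qed

lemma shadow_inc:
  fixes v :: "nat \<Rightarrow> rpt"
  assumes sh: "\<And>c. card {i. i < k \<and> (\<exists>p\<in>open_segment (v i) (v (Suc i)). fst p = c)} \<le> 1"
    and nv: "\<And>i. fst (v i) \<noteq> fst (v (Suc i))"
    and first: "fst (v 0) < fst (v 1)"
  shows "i < k \<Longrightarrow> fst (v i) < fst (v (Suc i))"
proof (induction i)
  case 0 then show ?case using first by simp
next
  case (Suc i)
  then have h: "fst (v i) < fst (v (Suc i))" by simp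
  show ?case
  proof (rule ccontr)
    assume "\<not> fst (v (Suc i)) < fst (v (Suc (Suc i)))"
    then have h2: "fst (v (Suc (Suc i))) < fst (v (Suc i))" using nv[of "Suc i"] by linarith
    define c where "c = (max (fst (v i)) (fst (v (Suc (Suc i)))) + fst (v (Suc i))) / 2"
    have "\<exists>p\<in>open_segment (v i) (v (Suc i)). fst p = c"
      by (rule open_seg_x) (use h h2 in \<open>auto simp: c_def\<close>)
    moreover have "\<exists>p\<in>open_segment (v (Suc i)) (v (Suc (Suc i))). fst p = c"
      by (rule open_seg_x') (use h h2 in \<open>auto simp: c_def\<close>)
    ultimately have "{i, Suc i} \<subseteq> {i. i < k \<and> (\<exists>p\<in>open_segment (v i) (v (Suc i)). fst p = c)}"
      using Suc by auto
    then have "card {i, Suc i} \<le> card {i. i < k \<and> (\<exists>p\<in>open_segment (v i) (v (Suc i)). fst p = c)}"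
      by (intro card_mono) auto
    then show False using sh[of c] by simp
  qed
qed



lemma lip_mono: "lipg L S \<Longrightarrow> L \<le> K \<Longrightarrow> lipg K S"
  unfolding lipg_def by (meson abs_ge_zero mult_right_mono order_trans)

lemma lipstep:
  assumes "lipg K S" "p \<in> S" "w \<in> S" "0 \<le> K" "\<bar>fst w - fst p\<bar> \<le> d"
  shows "\<bar>snd w - snd p\<bar> \<le> K * d"
proof -
  have "\<bar>snd w - snd p\<bar> \<le> K * \<bar>fst w - fst p\<bar>" using assms unfolding lipg_def by blast
  also have "\<dots> \<le> K * d" using assms by (intro mult_left_mono) auto
  finally show ?thesis .
qed

lemma tour_polyc:
  assumes vi: "valid_instance n base" and op: "is_OPT n base ps" and rr: "right_reflection ps j"
    and k: "1 \<le> k" and sh: "shadow (tour_subpath ps j fw k) = 1"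
  shows "polyc (vtx ps j fw) k (PC ps j fw)"
proof -
  have ne: "ps \<noteq> []" using op by (simp add: is_OPT_def is_tour_def)
  have jl: "j < length ps" using rr by (simp add: right_reflection_def)
  have first: "fst (vtx ps j fw 0) < fst (vtx ps j fw 1)"
  proof -
    have "vtx ps j fw 1 \<in> {p. fst p \<ge> fst (ps ! j)}"
      using rr unfolding right_reflection_def vtx1 by (cases fw) auto
    moreover have "fst (vtx ps j fw 0) \<noteq> fst (vtx ps j fw 1)" using vtx_nonvert[OF vi op, of j fw 0] by simp
    ultimately show ?thesis using vtx0[OF jl] by force
  qed
  have shc: "card {i. i < k \<and> (\<exists>p\<in>open_segment (vtx ps j fw i) (vtx ps j fw (Suc i)). fst p = c)} \<le> 1" for c
    using legs_le_shadow[of "tour_subpath ps j fw k" c] sh by (simp add: legs_sub)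
  have inc: "i < k \<Longrightarrow> fst (vtx ps j fw i) < fst (vtx ps j fw (Suc i))" for i
    by (rule shadow_inc[OF shc vtx_nonvert[OF vi op] first])
  show ?thesis
    by (intro polyc.intro polyl.intro polyc_axioms.intro k inc PC_leg[OF ne]) auto
qed



lemma core:
  fixes n :: nat and base :: "nat \<Rightarrow> rpt" and ps :: "rpt list"
    and j k1 k2 :: nat and fw :: bool
  assumes vi: "valid_instance n base"
    and op: "is_OPT n base ps"
    and rr: "right_reflection ps j"
    and la: "leg_above (ps ! j)
           (ps ! cidx (length ps) j (if fw then 1 else -1))
           (ps ! cidx (length ps) j (if fw then -1 else 1))"
    and k1: "1 \<le> k1" "k1 \<le> length ps" and k2: "1 \<le> k2" "k2 \<le> length ps"
    and sh1: "shadow (tour_subpath ps j fw k1) = 1"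
    and sh2: "shadow (tour_subpath ps j (\<not> fw) k2) = 1"
    and p1: "p1 \<in> plpts (vtx ps j fw) k1" and p2: "p2 \<in> plpts (vtx ps j (\<not> fw)) k2"
    and pe: "fst p1 = fst p2" and pl: "snd p1 < snd p2"
  shows False
proof -
  interpret A1: polyc "vtx ps j fw" k1 "PC ps j fw" by (rule tour_polyc[OF vi op rr k1(1) sh1])
  interpret A2: polyc "vtx ps j (\<not> fw)" k2 "PC ps j (\<not> fw)" by (rule tour_polyc[OF vi op rr k2(1) sh2])
  define \<sigma> where "\<sigma> = length ps"
  define v1 where "v1 = vtx ps j fw"
  define v2 where "v2 = vtx ps j (\<not> fw)"
  define P1 where "P1 = PC ps j fw"
  define P2 where "P2 = PC ps j (\<not> fw)"
  define S1 where "S1 = plpts v1 k1"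
  define S2 where "S2 = plpts v2 k2"
  define r where "r = ps ! j"
  have ne: "ps \<noteq> []" using op by (simp add: is_OPT_def is_tour_def)
  have jl: "j < \<sigma>" using rr by (simp add: right_reflection_def \<sigma>_def)
  have sp: "real \<sigma> > 0" using ne by (simp add: \<sigma>_def)
  have v10: "v1 0 = r" and v20: "v2 0 = r" using vtx0 jl by (simp_all add: v1_def v2_def r_def \<sigma>_def)
  have rS1: "r \<in> S1" using k1 v10 unfolding S1_def plpts_def by (auto intro!: bexI[of _ 0])
  have rS2: "r \<in> S2" using k2 v20 unfolding S2_def plpts_def by (auto intro!: bexI[of _ 0])
  have p1S: "p1 \<in> S1" and p2S: "p2 \<in> S2" using p1 p2 by (simp_all add: S1_def S2_def v1_def v2_def)
  define b where "b = fst p1"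
  define xr where "xr = fst r"
  have bnd1: "xr \<le> b" "b \<le> fst (v1 k1)" using A1.pts_bounds[OF p1] v10 by (auto simp: b_def xr_def v1_def)
  have bnd2: "b \<le> fst (v2 k2)" using A2.pts_bounds[OF p2] pe by (auto simp: b_def v2_def)
  have xrb: "xr < b"
  proof (rule ccontr)
    assume "\<not> xr < b"
    then have "fst p1 = fst r" "fst p2 = fst r" using bnd1 pe by (auto simp: b_def xr_def)
    then have "p1 = r" "p2 = r" using A1.unique A2.unique p1S p2S rS1 rS2
      by (auto simp: S1_def S2_def v1_def v2_def)
    then show False using pl by simp
  qed
  have w1: "xr < fst (v1 1)" using A1.inc[of 0] k1 v10 by (simp add: v1_def xr_def)
  have w2: "xr < fst (v2 1)" using A2.inc[of 0] k2 v20 by (simp add: v2_def xr_def)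
  define \<mu> where "\<mu> = min (min (fst (v1 1) - xr) (fst (v2 1) - xr)) (b - xr)"
  have mu: "0 < \<mu>" "\<mu> \<le> fst (v1 1) - xr" "\<mu> \<le> fst (v2 1) - xr" "\<mu> \<le> b - xr"
    using w1 w2 xrb by (auto simp: \<mu>_def)
  define a where "a = xr + \<mu> / 2"
  have a_bounds: "xr < a" "a < fst (v1 1)" "a < fst (v2 1)" "a < b"
    using mu unfolding a_def by linarith+
  have "fst r < fst (v1 1)" "fst r \<le> a" "a \<le> fst (v1 1)" using w1 a_bounds by (auto simp: xr_def)
  then obtain pa1 where pa1: "pa1 \<in> closed_segment r (v1 1)" "fst pa1 = a"
    using seg_point_x by blast
  have "fst r < fst (v2 1)" "fst r \<le> a" "a \<le> fst (v2 1)" using w2 a_bounds by (auto simp: xr_def)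
  then obtain pa2 where pa2: "pa2 \<in> closed_segment r (v2 1)" "fst pa2 = a"
    using seg_point_x by blast
  have pa1S: "pa1 \<in> S1" using pa1 k1 v10 unfolding S1_def plpts_def by (auto intro!: bexI[of _ 0])
  have pa2S: "pa2 \<in> S2" using pa2 k2 v20 unfolding S2_def plpts_def by (auto intro!: bexI[of _ 0])
  have "pa1 \<noteq> r" "pa2 \<noteq> r" using pa1 pa2 a_bounds by (auto simp: xr_def)
  moreover have "v1 1 = ps ! cidx (length ps) j (if fw then 1 else -1)"
    using vtx1[of ps j fw] by (simp add: v1_def)
  moreover have "v2 1 = ps ! cidx (length ps) j (if fw then -1 else 1)"
    using vtx1[of ps j "\<not> fw"] by (cases fw) (simp_all add: v2_def)
  ultimately have Da: "snd pa2 < snd pa1"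
    using la pa1 pa2 unfolding leg_above_def r_def by auto
  define K where "K = max A1.KK A2.KK"
  have K0: "0 \<le> K" using A1.KK_nonneg by (simp add: K_def)
  have L1: "lipg K S1" using lip_mono[OF A1.lip] by (simp add: K_def S1_def v1_def)
  have L2: "lipg K S2" using lip_mono[OF A2.lip] by (simp add: K_def S2_def v2_def)
  define m where "m = min (min (snd pa1 - snd pa2) (snd p2 - snd p1)) (b - a)"
  have m: "0 < m" "m \<le> snd pa1 - snd pa2" "m \<le> snd p2 - snd p1" "m \<le> b - a"
    using Da pl a_bounds by (auto simp: m_def)
  define \<epsilon> where "\<epsilon> = m / (2 * K + 4)"
  have e0: "0 < \<epsilon>" using m K0 by (simp add: \<epsilon>_def)
  have em0: "(2 * K + 4) * \<epsilon> = m" unfolding \<epsilon>_def using K0 by simp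
  have em: "K * (2 * \<epsilon>) + 4 * \<epsilon> = m" using em0 by (simp add: algebra_simps)
  have Ke0: "0 \<le> K * (2 * \<epsilon>)" using K0 e0 by simp
  obtain \<gamma> :: "real \<Rightarrow> rpt" where gc: "continuous_on UNIV \<gamma>" and gper: "\<And>t. \<gamma> (t + 1) = \<gamma> t"
    and ginj: "inj_on \<gamma> {0..<1}" and gapp: "\<And>t. dist (\<gamma> t) (tour_curve ps t) < \<epsilon>"
    using op e0 unfolding is_OPT_def not_self_crossing_def by blast
  have xv10: "fst (v1 0) = xr" and xv20: "fst (v2 0) = xr" using v10 v20 by (simp_all add: xr_def)
  have ab1: "fst (v1 0) \<le> a" "a \<le> fst (v1 k1)" "fst (v1 0) \<le> b"
    using xv10 a_bounds bnd1 by linarith+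
  have ab2: "fst (v2 0) \<le> a" "a \<le> fst (v2 k2)" "fst (v2 0) \<le> b"
    using xv20 a_bounds bnd2 by linarith+
  obtain \<alpha>1 where al1: "\<alpha>1 \<in> {0..real k1}" "fst (P1 \<alpha>1) = a"
    using A1.exists_tau[of a] ab1 unfolding v1_def P1_def by blast
  obtain \<beta>1 where be1: "\<beta>1 \<in> {0..real k1}" "fst (P1 \<beta>1) = b"
    using A1.exists_tau[of b] ab1 bnd1 unfolding v1_def P1_def by blast
  obtain \<alpha>2 where al2: "\<alpha>2 \<in> {0..real k2}" "fst (P2 \<alpha>2) = a"
    using A2.exists_tau[of a] ab2 unfolding v2_def P2_def by blast
  obtain \<beta>2 where be2: "\<beta>2 \<in> {0..real k2}" "fst (P2 \<beta>2) = b"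
    using A2.exists_tau[of b] ab2 bnd2 unfolding v2_def P2_def by blast
  have C1: "\<tau> \<in> {0..real k1} \<Longrightarrow> P1 \<tau> \<in> S1" for \<tau> using A1.curve_in by (auto simp: P1_def S1_def v1_def)
  have C2: "\<tau> \<in> {0..real k2} \<Longrightarrow> P2 \<tau> \<in> S2" for \<tau> using A2.curve_in by (auto simp: P2_def S2_def v2_def)
  have U1: "p \<in> S1 \<Longrightarrow> q \<in> S1 \<Longrightarrow> fst p = fst q \<Longrightarrow> p = q" for p q
    using A1.unique by (simp add: S1_def v1_def)
  have U2: "p \<in> S2 \<Longrightarrow> q \<in> S2 \<Longrightarrow> fst p = fst q \<Longrightarrow> p = q" for p q
    using A2.unique by (simp add: S2_def v2_def)
  have Pal1: "P1 \<alpha>1 = pa1" using U1[OF C1[OF al1(1)] pa1S] al1 pa1 by simp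
  have Pbe1: "P1 \<beta>1 = p1" using U1[OF C1[OF be1(1)] p1S] be1 by (simp add: b_def)
  have Pal2: "P2 \<alpha>2 = pa2" using U2[OF C2[OF al2(1)] pa2S] al2 pa2 by simp
  have Pbe2: "P2 \<beta>2 = p2" using U2[OF C2[OF be2(1)] p2S] be2 pe by (simp add: b_def)
  have M1: "\<tau> \<in> {0..real k1} \<Longrightarrow> \<tau>' \<in> {0..real k1} \<Longrightarrow> fst (P1 \<tau>) < fst (P1 \<tau>') \<Longrightarrow> \<tau> < \<tau>'" for \<tau> \<tau>'
    using A1.mono_tau by (auto simp: P1_def)
  have M2: "\<tau> \<in> {0..real k2} \<Longrightarrow> \<tau>' \<in> {0..real k2} \<Longrightarrow> fst (P2 \<tau>) < fst (P2 \<tau>') \<Longrightarrow> \<tau> < \<tau>'" for \<tau> \<tau>'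
    using A2.mono_tau by (auto simp: P2_def)
  have P10: "fst (P1 0) = xr" using A1.curve_0 xv10 by (simp add: P1_def v1_def)
  have P20: "fst (P2 0) = xr" using A2.curve_0 xv20 by (simp add: P2_def v2_def)
  have al1p: "0 < \<alpha>1" using M1[of 0 \<alpha>1] al1 P10 a_bounds k1 by auto
  have al2p: "0 < \<alpha>2" using M2[of 0 \<alpha>2] al2 P20 a_bounds k2 by auto
  have ab1': "\<alpha>1 < \<beta>1" using M1[of \<alpha>1 \<beta>1] al1 be1 a_bounds by auto
  have ab2': "\<alpha>2 < \<beta>2" using M2[of \<alpha>2 \<beta>2] al2 be2 a_bounds by auto
  have shift: "P1 \<tau> = P2 (real \<sigma> - \<tau>)" for \<tau>
    using PC_shift[OF ne, of j fw \<tau>] by (simp add: P1_def P2_def \<sigma>_def)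
  have kk: "k1 + k2 \<le> \<sigma>"
  proof (rule ccontr)
    assume "\<not> k1 + k2 \<le> \<sigma>"
    then have lt: "real \<sigma> - real k2 < real k1" by linarith
    have k2s: "k2 \<le> \<sigma>" "k1 \<le> \<sigma>" using k1 k2 by (simp_all add: \<sigma>_def)
    have "fst (P1 (real \<sigma> - real k2)) < fst (P1 (real k1))"
      using A1.strict[of "real \<sigma> - real k2" "real k1"] lt k2s by (simp add: P1_def)
    moreover have "fst (P2 (real \<sigma> - real k1)) < fst (P2 (real k2))"
      using A2.strict[of "real \<sigma> - real k1" "real k2"] lt k2s by (simp add: P2_def)
    ultimately show False using shift[of "real \<sigma> - real k2"] shift[of "real k1"] by simp
  qed
  define tA where "tA \<tau> = (real j + real_of_int (dd fw) * \<tau>) / real \<sigma>" for \<tau>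
  define tB where "tB \<tau> = (real j + real_of_int (dd (\<not> fw)) * \<tau>) / real \<sigma>" for \<tau>
  have cl1: "\<bar>fst (\<gamma> (tA \<tau>)) - fst (P1 \<tau>)\<bar> < \<epsilon> \<and> \<bar>snd (\<gamma> (tA \<tau>)) - snd (P1 \<tau>)\<bar> < \<epsilon>" for \<tau>
  proof -
    have "dist (\<gamma> (tA \<tau>)) (P1 \<tau>) < \<epsilon>" using gapp by (simp add: P1_def PC_def tA_def \<sigma>_def)
    then show ?thesis using dist_fst_le[of "\<gamma> (tA \<tau>)" "P1 \<tau>"] dist_snd_le[of "\<gamma> (tA \<tau>)" "P1 \<tau>"]
      by (simp add: dist_real_def)
  qed
  have cl2: "\<bar>fst (\<gamma> (tB \<tau>)) - fst (P2 \<tau>)\<bar> < \<epsilon> \<and> \<bar>snd (\<gamma> (tB \<tau>)) - snd (P2 \<tau>)\<bar> < \<epsilon>" for \<tau>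
  proof -
    have "dist (\<gamma> (tB \<tau>)) (P2 \<tau>) < \<epsilon>" using gapp by (simp add: P2_def PC_def tB_def \<sigma>_def)
    then show ?thesis using dist_fst_le[of "\<gamma> (tB \<tau>)" "P2 \<tau>"] dist_snd_le[of "\<gamma> (tB \<tau>)" "P2 \<tau>"]
      by (simp add: dist_real_def)
  qed
  have rng1: "P1 \<tau> \<in> S1 \<and> a \<le> fst (P1 \<tau>) \<and> fst (P1 \<tau>) \<le> b" if "\<tau> \<in> {\<alpha>1..\<beta>1}" for \<tau>
  proof -
    have t: "\<tau> \<in> {0..real k1}" using that al1 be1 by auto
    have "\<not> fst (P1 \<tau>) < a" using M1[OF t al1(1)] al1 that by auto
    moreover have "\<not> b < fst (P1 \<tau>)" using M1[OF be1(1) t] be1 that by auto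
    ultimately show ?thesis using C1[OF t] by auto
  qed
  have rng2: "P2 \<tau> \<in> S2 \<and> a \<le> fst (P2 \<tau>) \<and> fst (P2 \<tau>) \<le> b" if "\<tau> \<in> {\<alpha>2..\<beta>2}" for \<tau>
  proof -
    have t: "\<tau> \<in> {0..real k2}" using that al2 be2 by auto
    have "\<not> fst (P2 \<tau>) < a" using M2[OF t al2(1)] al2 that by auto
    moreover have "\<not> b < fst (P2 \<tau>)" using M2[OF be2(1) t] be2 that by auto
    ultimately show ?thesis using C2[OF t] by auto
  qed
  define A where "A s = \<gamma> (tA (\<alpha>1 + s * (\<beta>1 - \<alpha>1)))" for s
  define B where "B s = \<gamma> (tB (\<alpha>2 + s * (\<beta>2 - \<alpha>2)))" for s
  have pA: "path A" unfolding path_def A_def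
    by (rule continuous_on_compose2[OF gc]) (use sp in \<open>auto simp: tA_def intro!: continuous_intros\<close>)
  have pB: "path B" unfolding path_def B_def
    by (rule continuous_on_compose2[OF gc]) (use sp in \<open>auto simp: tB_def intro!: continuous_intros\<close>)
  have imA: "\<exists>\<tau>\<in>{\<alpha>1..\<beta>1}. z = \<gamma> (tA \<tau>)" if zA: "z \<in> path_image A" for z
  proof -
    obtain s where s: "s \<in> {0..1}" "z = A s" using zA by (auto simp: path_image_def)
    have "s * (\<beta>1 - \<alpha>1) \<le> 1 * (\<beta>1 - \<alpha>1)" using s ab1' by (intro mult_right_mono) auto
    moreover have "0 \<le> s * (\<beta>1 - \<alpha>1)" using s ab1' by simp
    ultimately show ?thesis using s unfolding A_def by (intro bexI[of _ "\<alpha>1 + s * (\<beta>1 - \<alpha>1)"]) auto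
  qed
  have imB: "\<exists>\<tau>\<in>{\<alpha>2..\<beta>2}. z = \<gamma> (tB \<tau>)" if zB: "z \<in> path_image B" for z
  proof -
    obtain s where s: "s \<in> {0..1}" "z = B s" using zB by (auto simp: path_image_def)
    have "s * (\<beta>2 - \<alpha>2) \<le> 1 * (\<beta>2 - \<alpha>2)" using s ab2' by (intro mult_right_mono) auto
    moreover have "0 \<le> s * (\<beta>2 - \<alpha>2)" using s ab2' by simp
    ultimately show ?thesis using s unfolding B_def by (intro bexI[of _ "\<alpha>2 + s * (\<beta>2 - \<alpha>2)"]) auto
  qed
  have sA: "pathstart A = \<gamma> (tA \<alpha>1)" "pathfinish A = \<gamma> (tA \<beta>1)"
    by (simp_all add: pathstart_def pathfinish_def A_def)
  have sB: "pathstart B = \<gamma> (tB \<alpha>2)" "pathfinish B = \<gamma> (tB \<beta>2)"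
    by (simp_all add: pathstart_def pathfinish_def B_def)
  have nearA: "\<exists>w\<in>S1. a \<le> fst w \<and> fst w \<le> b \<and> \<bar>fst z - fst w\<bar> < \<epsilon> \<and> \<bar>snd z - snd w\<bar> < \<epsilon>"
    if "z \<in> path_image A" for z
    using imA[OF that] rng1 cl1 by blast
  have nearB: "\<exists>w\<in>S2. a \<le> fst w \<and> fst w \<le> b \<and> \<bar>fst z - fst w\<bar> < \<epsilon> \<and> \<bar>snd z - snd w\<bar> < \<epsilon>"
    if "z \<in> path_image B" for z
    using imB[OF that] rng2 cl2 by blast
  have disj: "path_image A \<inter> path_image B = {}"
  proof (rule ccontr)
    assume "path_image A \<inter> path_image B \<noteq> {}"
    then obtain z where "z \<in> path_image A" "z \<in> path_image B" by blast
    then obtain \<tau>1 \<tau>2 where t1: "\<tau>1 \<in> {\<alpha>1..\<beta>1}" and t2: "\<tau>2 \<in> {\<alpha>2..\<beta>2}"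
      and eq: "\<gamma> (tA \<tau>1) = \<gamma> (tB \<tau>2)" using imA imB by metis
    obtain m0 :: int where m0: "tA \<tau>1 - tB \<tau>2 = of_int m0" using periodic_inj[OF gper ginj eq] by blast
    define u where "u = (\<tau>1 + \<tau>2) / real \<sigma>"
    have eqd: "tA \<tau>1 - tB \<tau>2 = real_of_int (dd fw) * u"
      by (cases fw) (simp_all add: tA_def tB_def dd_def u_def diff_divide_distrib add_divide_distrib)
    obtain nn :: int where nn: "u = of_int nn"
    proof (cases fw)
      case True then show ?thesis using that[of m0] m0 eqd by (simp add: dd_def)
    next
      case False then show ?thesis using that[of "- m0"] m0 eqd by (simp add: dd_def)
    qed
    have "0 < \<tau>1 + \<tau>2" using t1 t2 al1p al2p by auto
    then have "0 < u" using sp by (simp add: u_def)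
    have ks: "real k1 + real k2 \<le> real \<sigma>" using kk by linarith
    have "\<tau>1 + \<tau>2 \<le> real \<sigma>" using t1 t2 be1 be2 ks by auto
    then have "u \<le> 1" using sp by (simp add: u_def)
    have "nn = 1" using \<open>0 < u\<close> \<open>u \<le> 1\<close> nn by (metis of_int_less_iff of_int_le_iff of_int_0 of_int_1 zero_less_imp_eq_int linorder_not_less nat_int_comparison(2) order_antisym zless_imp_add1_zle add_0)
    then have "\<tau>1 + \<tau>2 = real \<sigma>" using nn sp by (simp add: u_def)
    then have "\<beta>1 = real k1" "\<beta>2 = real \<sigma> - real k1" using t1 t2 be1 be2 ks by auto
    then have "p1 = p2" using shift[of \<beta>1] Pbe1 Pbe2 by simp
    then show False using pl by simp
  qed
  have Pa1: "snd (P1 \<alpha>1) = snd pa1" "fst (P1 \<alpha>1) = a" using Pal1 pa1 by auto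
  have Pa2: "snd (P2 \<alpha>2) = snd pa2" "fst (P2 \<alpha>2) = a" using Pal2 pa2 by auto
  have Pb1: "snd (P1 \<beta>1) = snd p1" "fst (P1 \<beta>1) = b" using Pbe1 by (auto simp: b_def)
  have Pb2: "snd (P2 \<beta>2) = snd p2" "fst (P2 \<beta>2) = b" using Pbe2 pe by (auto simp: b_def)
  note e1 = cl1[of \<alpha>1] cl1[of \<beta>1] cl2[of \<alpha>2] cl2[of \<beta>2]
  show False
  proof (rule crossing[OF pA pB disj])
    show "\<forall>q\<in>path_image B. fst q \<le> fst (pathstart A) \<longrightarrow> snd q < snd (pathstart A)"
    proof (intro ballI impI)
      fix q assume q: "q \<in> path_image B" and ql: "fst q \<le> fst (pathstart A)"
      obtain w where w: "w \<in> S2" "a \<le> fst w" "fst w \<le> b" "\<bar>fst q - fst w\<bar> < \<epsilon>" "\<bar>snd q - snd w\<bar> < \<epsilon>"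
        using nearB[OF q] by blast
      have "\<bar>fst w - fst pa2\<bar> \<le> 2 * \<epsilon>" using w ql sA e1 Pa1 pa2 by (auto simp: abs_less_iff abs_le_iff)
      then have "\<bar>snd w - snd pa2\<bar> \<le> K * (2 * \<epsilon>)" using lipstep[OF L2 pa2S w(1) K0] by blast
      then show "snd q < snd (pathstart A)" using w sA e1 Pa1 em m by (auto simp: abs_less_iff abs_le_iff)
    qed
    show "snd (pathstart B) < snd (pathstart A)" using sA sB e1 Pa1 Pa2 em m Ke0 by (auto simp: abs_less_iff abs_le_iff)
    show "fst (pathstart A) < fst (pathfinish B)" using sA sB e1 Pa1 Pb2 em m Ke0 by (auto simp: abs_less_iff abs_le_iff)
    show "\<forall>q\<in>path_image B. fst (pathfinish A) \<le> fst q \<longrightarrow> snd (pathfinish A) < snd q"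
    proof (intro ballI impI)
      fix q assume q: "q \<in> path_image B" and ql: "fst (pathfinish A) \<le> fst q"
      obtain w where w: "w \<in> S2" "a \<le> fst w" "fst w \<le> b" "\<bar>fst q - fst w\<bar> < \<epsilon>" "\<bar>snd q - snd w\<bar> < \<epsilon>"
        using nearB[OF q] by blast
      have "\<bar>fst w - fst p2\<bar> \<le> 2 * \<epsilon>" using w ql sA e1 Pb1 pe by (auto simp: b_def abs_less_iff abs_le_iff)
      then have "\<bar>snd w - snd p2\<bar> \<le> K * (2 * \<epsilon>)" using lipstep[OF L2 p2S w(1) K0] by blast
      then show "snd (pathfinish A) < snd q" using w sA e1 Pb1 em m by (auto simp: abs_less_iff abs_le_iff)
    qed
    show "snd (pathfinish A) < snd (pathfinish B)" using sA sB e1 Pb1 Pb2 em m Ke0 by (auto simp: abs_less_iff abs_le_iff)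
    show "fst (pathstart B) < fst (pathfinish A)" using sA sB e1 Pa2 Pb1 em m Ke0 by (auto simp: abs_less_iff abs_le_iff)
    show "\<forall>p\<in>path_image A. fst p = fst (pathstart B) \<longrightarrow> snd (pathstart B) < snd p"
    proof (intro ballI impI)
      fix q assume q: "q \<in> path_image A" and ql: "fst q = fst (pathstart B)"
      obtain w where w: "w \<in> S1" "a \<le> fst w" "fst w \<le> b" "\<bar>fst q - fst w\<bar> < \<epsilon>" "\<bar>snd q - snd w\<bar> < \<epsilon>"
        using nearA[OF q] by blast
      have "\<bar>fst w - fst pa1\<bar> \<le> 2 * \<epsilon>" using w ql sB e1 Pa2 pa1 by (auto simp: abs_less_iff abs_le_iff)
      then have "\<bar>snd w - snd pa1\<bar> \<le> K * (2 * \<epsilon>)" using lipstep[OF L1 pa1S w(1) K0] by blast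
      then show "snd (pathstart B) < snd q" using w sB e1 Pa2 em m by (auto simp: abs_less_iff abs_le_iff)
    qed
    show "\<forall>p\<in>path_image A. fst p = fst (pathfinish B) \<longrightarrow> snd p < snd (pathfinish B)"
    proof (intro ballI impI)
      fix q assume q: "q \<in> path_image A" and ql: "fst q = fst (pathfinish B)"
      obtain w where w: "w \<in> S1" "a \<le> fst w" "fst w \<le> b" "\<bar>fst q - fst w\<bar> < \<epsilon>" "\<bar>snd q - snd w\<bar> < \<epsilon>"
        using nearA[OF q] by blast
      have "\<bar>fst w - fst p1\<bar> \<le> 2 * \<epsilon>" using w ql sB e1 Pb2 by (auto simp: b_def abs_less_iff abs_le_iff)
      then have "\<bar>snd w - snd p1\<bar> \<le> K * (2 * \<epsilon>)" using lipstep[OF L1 p1S w(1) K0] by blast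
      then show "snd q < snd (pathfinish B)" using w sB e1 Pb2 em m by (auto simp: abs_less_iff abs_le_iff)
    qed
  qed
qed


theorem lemma5:
  fixes n :: nat and base :: "nat \<Rightarrow> rpt" and ps :: "rpt list"
    and j k1 k2 :: nat and fwd :: bool and c :: real
  assumes "valid_instance n base"
    and "is_OPT n base ps"
    and "right_reflection ps j"
    and "leg_above (ps ! j)
           (ps ! cidx (length ps) j (if fwd then 1 else -1))
           (ps ! cidx (length ps) j (if fwd then -1 else 1))"
    and "1 \<le> k1" and "k1 \<le> length ps" and "1 \<le> k2" and "k2 \<le> length ps"
    and "shadow (tour_subpath ps j fwd k1) = 1"
    and "shadow (tour_subpath ps j (\<not> fwd) k2) = 1"
    and "c > fst (ps ! j)"
    and "\<exists>p \<in> path_pts (tour_subpath ps j fwd k1). fst p = c"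
    and "\<exists>p \<in> path_pts (tour_subpath ps j (\<not> fwd) k2). fst p = c"
  shows "path_above (tour_subpath ps j fwd k1) (tour_subpath ps j (\<not> fwd) k2) (fst (ps ! j)) c"
proof -
  note as = assms
  interpret A1: polyc "vtx ps j fwd" k1 "PC ps j fwd" by (rule tour_polyc[OF as(1,2,3,5,9)])
  have jl: "j < length ps" using as(3) by (simp add: right_reflection_def)
  have v0: "fst (vtx ps j fwd 0) = fst (ps ! j)" using vtx0[OF jl] by simp
  obtain pc where pc: "pc \<in> plpts (vtx ps j fwd) k1" "fst pc = c" using as(12) by (auto simp: path_pts_sub)
  have ck: "c \<le> fst (vtx ps j fwd k1)" using A1.pts_bounds[OF pc(1)] pc by simp
  show ?thesis unfolding path_above_def path_pts_sub
  proof
    fix x assume x: "x \<in> {fst (ps ! j)..c}"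
    obtain p where p: "p \<in> plpts (vtx ps j fwd) k1" "fst p = x"
      using A1.exists_pt[of x] x ck v0 by auto
    have "\<forall>q\<in>plpts (vtx ps j fwd) k1 \<union> plpts (vtx ps j (\<not> fwd)) k2. fst q = x \<longrightarrow> snd q \<le> snd p"
    proof (intro ballI impI)
      fix q assume q: "q \<in> plpts (vtx ps j fwd) k1 \<union> plpts (vtx ps j (\<not> fwd)) k2" and qx: "fst q = x"
      show "snd q \<le> snd p"
      proof (cases "q \<in> plpts (vtx ps j fwd) k1")
        case True then show ?thesis using A1.unique[OF True p(1)] qx p by simp
      next
        case False
        then have q2: "q \<in> plpts (vtx ps j (\<not> fwd)) k2" using q by blast
        show ?thesis
        proof (rule ccontr)
          assume "\<not> snd q \<le> snd p"
          then show False using core[OF as(1-10) p(1) q2] qx p by simp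
        qed
      qed
    qed
    then show "\<exists>p\<in>plpts (vtx ps j fwd) k1. fst p = x \<and>
        (\<forall>q\<in>plpts (vtx ps j fwd) k1 \<union> plpts (vtx ps j (\<not> fwd)) k2. fst q = x \<longrightarrow> snd q \<le> snd p)"
      using p by blast
  qed
qed


end
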